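(* Let $F\in L^2(\mu)$ and $m\in\mathbb N$. Then $F\in\mathcal D^{m,2}$ if and only if \[ \sup_{0<\lambda<1}\partial_\lambda^m\left(\int_{\mathcal S'_{\mathbb C}}|SF(\lambda u)|^2\,d\nu(u)\right)<\infty . \]
   Context: Let $\mu$ be the white noise (standard Gaussian) measure on the tempered distributions $\mathcal S'=\mathcal S'(\mathbb R;\mathbb R)$, i.e. $\int e^{i\langle\xi,x\rangle}d\mu(x)=e^{-|\xi|^2/2}$ for $\xi$ in the Schwartz space $\mathcal S$, where $|\cdot|$ is the $L^2(\mathbb R,dx)$ norm. Every $F\in L^2(\mu)$ (complex valued) has a Wiener–Itô chaos decomposition $F=\sum_{n\ge0}\langle F^{(n)},:\cdot^{\otimes n}:\rangle$ with symmetric kernels $F^{(n)}\in L^2(\mathbb R^n,dx)_{\mathbb C}$ and $\|F\|^2_{L^2(\mu)}=\sum_n n!|F^{(n)}|^2$. The $S$-transform is $SF(h)=\sum_n\langle F^{(n)},h^{\otimes n}\rangle$ for $h\in\mathcal S_{\mathbb C}$ (equivalently $SF(h)=\int\exp(\langle h,\omega\rangle-\tfrac12\langle h,h\rangle)F(\omega)d\mu(\omega)$). Let $\nu$ be the Gaussian measure on $\mathcal S'_{\mathbb C}$ with $\int\exp(i\,\mathrm{Re}\langle h,\bar u\rangle)d\nu(u)=\exp(-\tfrac14\langle h,\bar h\rangle)$; for square-integrable symmetric kernels the monomials $u\mapsto\langle F^{(n)},u^{\otimes n}\rangle$ are defined in $L^2(\nu)$, mutually orthogonal for different $n$, with $\int|\langle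 F^{(n)},u^{\otimes n}\rangle|^2d\nu=n!|F^{(n)}|^2$, and $SF(\lambda u):=\sum_n\lambda^n\langle F^{(n)},u^{\otimes n}\rangle$. For $\alpha\in\mathbb R$, the Malliavin–Watanabe–Sobolev space $\mathcal D^{\alpha,2}$ consists of those (generalized) chaos series $\Phi$ with square-integrable symmetric kernels $\Phi^{(n)}$ such that $\|\Phi\|^2_{\alpha,2}=\sum_{n\ge0}(1+n^\alpha)\,n!\,|\Phi^{(n)}|^2<\infty$. *)

theory Defs
  imports "HOL-Probability.Probability"
begin

text \<open>Lebesgue measure on R^n, realised as the product measure on functions
  nat => real indexed by {..<n} (for n = 0 this is the one-point probability space).\<close>
definition lebesgue_n :: "nat \<Rightarrow> (nat \<Rightarrow> real) measure" where
  "lebesgue_n n = PiM {..<n} (\<lambda>_. lborel)"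

definition sq_int_sym_kernel :: "nat \<Rightarrow> ((nat \<Rightarrow> real) \<Rightarrow> complex) \<Rightarrow> bool" where
  "sq_int_sym_kernel n f \<longleftrightarrow>
     f \<in> borel_measurable (lebesgue_n n) \<and>
     integrable (lebesgue_n n) (\<lambda>x. (cmod (f x))\<^sup>2) \<and>
     (\<forall>p. p permutes {..<n} \<longrightarrow> (\<forall>x\<in>space (lebesgue_n n). f (x \<circ> p) = f x))"

definition kernel_norm_sq :: "nat \<Rightarrow> ((nat \<Rightarrow> real) \<Rightarrow> complex) \<Rightarrow> real" where
  "kernel_norm_sq n f = (LINT x|lebesgue_n n. (cmod (f x))\<^sup>2)"

text \<open>Membership in the Malliavin--Watanabe--Sobolev space D^{alpha,2}, for the chaos
  series with kernels Fk: sum_n (1 + n^alpha) n! |Fk n|^2 < infinity.\<close>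
definition in_D :: "real \<Rightarrow> (nat \<Rightarrow> (nat \<Rightarrow> real) \<Rightarrow> complex) \<Rightarrow> bool" where
  "in_D \<alpha> Fk \<longleftrightarrow> (\<forall>n. sq_int_sym_kernel n (Fk n)) \<and>
     summable (\<lambda>n. (1 + real n powr \<alpha>) * fact n * kernel_norm_sq n (Fk n))"

text \<open>The integral int |SF(lambda u)|^2 d nu(u), where SF(lambda u) = sum_n lambda^n mon n u
  is understood as an L^2(nu) series: the value is the limit of the squared
  L^2(nu) norms of its partial sums.\<close>
definition S_energy :: "'u measure \<Rightarrow> (nat \<Rightarrow> 'u \<Rightarrow> complex) \<Rightarrow> real \<Rightarrow> real" where
  "S_energy \<nu> mon lam =
     lim (\<lambda>N. LINT u|\<nu>. (cmod (\<Sum>n<N. complex_of_real lam ^ n * mon n u))\<^sup>2)"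

end

theory Submission
  imports Defs
begin

lemma L2_partial:
  fixes \<nu> :: "'u measure" and mon :: "nat \<Rightarrow> 'u \<Rightarrow> complex" and c :: "nat \<Rightarrow> complex"
  assumes mono_meas: "\<forall>n. mon n \<in> borel_measurable \<nu>"
    and mono_L2: "\<forall>n. integrable \<nu> (\<lambda>u. (cmod (mon n u))\<^sup>2)"
    and mono_orth: "\<forall>n k. n \<noteq> k \<longrightarrow> (LINT u|\<nu>. mon n u * cnj (mon k u)) = 0"
  shows "(LINT u|\<nu>. (cmod (\<Sum>n<N. c n * mon n u))\<^sup>2)
       = (\<Sum>n<N. (cmod (c n))\<^sup>2 * (LINT u|\<nu>. (cmod (mon n u))\<^sup>2))"
proof -
  have [measurable]: "mon i \<in> borel_measurable \<nu>" for i using mono_meas by auto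
  have [measurable]: "(\<lambda>x. cnj (mon i x)) \<in> borel_measurable \<nu>" for i
  proof (rule measurable_compose[of "mon i" _ borel cnj])
    show "mon i \<in> borel_measurable \<nu>" using mono_meas by auto
    show "cnj \<in> borel_measurable borel"
      by (intro borel_measurable_continuous_onI continuous_on_cnj continuous_on_id)
  qed
  have intc: "integrable \<nu> (\<lambda>u. mon n u * cnj (mon k u))" for n k
  proof (rule Bochner_Integration.integrable_bound[of _ "\<lambda>u. (cmod (mon n u))\<^sup>2 + (cmod (mon k u))\<^sup>2"])
    show "integrable \<nu> (\<lambda>u. (cmod (mon n u))\<^sup>2 + (cmod (mon k u))\<^sup>2)"
      using mono_L2 by auto
    show "(\<lambda>u. mon n u * cnj (mon k u)) \<in> borel_measurable \<nu>"
      by measurable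
    show "AE x in \<nu>. norm (mon n x * cnj (mon k x)) \<le> norm ((cmod (mon n x))\<^sup>2 + (cmod (mon k x))\<^sup>2)"
    proof (rule AE_I2)
      fix x
      have h2: "2 * (cmod (mon n x) * cmod (mon k x)) \<le> (cmod (mon n x))\<^sup>2 + (cmod (mon k x))\<^sup>2"
        using sum_squares_bound[of "cmod (mon n x)" "cmod (mon k x)"] by (simp add: mult.assoc)
      have h0: "0 \<le> cmod (mon n x) * cmod (mon k x)" by simp
      have "cmod (mon n x) * cmod (mon k x) \<le> (cmod (mon n x))\<^sup>2 + (cmod (mon k x))\<^sup>2"
        using h2 h0 by linarith
      then show "norm (mon n x * cnj (mon k x)) \<le> norm ((cmod (mon n x))\<^sup>2 + (cmod (mon k x))\<^sup>2)"
        by (simp add: norm_mult)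
    qed
  qed
  have diag: "(LINT u|\<nu>. mon n u * cnj (mon n u)) = of_real (LINT u|\<nu>. (cmod (mon n u))\<^sup>2)" for n
    by (simp only: complex_norm_square[symmetric] integral_complex_of_real)
  have "complex_of_real (LINT u|\<nu>. (cmod (\<Sum>n<N. c n * mon n u))\<^sup>2)
      = (LINT u|\<nu>. (\<Sum>n<N. c n * mon n u) * cnj (\<Sum>n<N. c n * mon n u))"
    by (simp only: complex_norm_square[symmetric] integral_complex_of_real)
  also have "\<dots> = (LINT u|\<nu>. (\<Sum>n<N. \<Sum>k<N. (c n * cnj (c k)) * (mon n u * cnj (mon k u))))"
    by (simp add: cnj_sum sum_product mult_ac)
  also have "\<dots> = (\<Sum>n<N. \<Sum>k<N. (c n * cnj (c k)) * (LINT u|\<nu>. mon n u * cnj (mon k u)))"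
    using intc by (simp add: integral_sum)
  also have "\<dots> = (\<Sum>n<N. \<Sum>k<N. if k = n then (c n * cnj (c n)) * of_real (LINT u|\<nu>. (cmod (mon n u))\<^sup>2) else 0)"
    by (intro sum.cong refl) (use mono_orth diag in auto)
  also have "\<dots> = (\<Sum>n<N. complex_of_real ((cmod (c n))\<^sup>2 * (LINT u|\<nu>. (cmod (mon n u))\<^sup>2)))"
    by (intro sum.cong refl) (simp add: complex_norm_square[symmetric])
  also have "\<dots> = complex_of_real (\<Sum>n<N. (cmod (c n))\<^sup>2 * (LINT u|\<nu>. (cmod (mon n u))\<^sup>2))"
    by simp
  finally show ?thesis by (simp only: of_real_eq_iff)
qed


definition bseq :: "(nat \<Rightarrow> real) \<Rightarrow> nat \<Rightarrow> real" where
  "bseq a k = (if even k then a (k div 2) else 0)"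

definition Cc :: "(nat \<Rightarrow> real) \<Rightarrow> nat \<Rightarrow> nat \<Rightarrow> real" where
  "Cc a k n = pochhammer (real n + 1) k * bseq a (n + k)"

definition Pk :: "(nat \<Rightarrow> real) \<Rightarrow> nat \<Rightarrow> real \<Rightarrow> real" where
  "Pk a k x = (\<Sum>n. Cc a k n * x ^ n)"

lemma bseq_nonneg: "(\<And>n. a n \<ge> 0) \<Longrightarrow> bseq a k \<ge> 0"
  by (simp add: bseq_def)

lemma Cc_nonneg: "(\<And>n. a n \<ge> 0) \<Longrightarrow> Cc a k n \<ge> 0"
  unfolding Cc_def by (intro mult_nonneg_nonneg pochhammer_nonneg bseq_nonneg) auto

lemma diffs_Cc: "diffs (Cc a k) = Cc a (Suc k)"
proof
  fix n
  have "real (Suc n) + 1 = real n + 1 + 1" by simp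
  then show "diffs (Cc a k) n = Cc a (Suc k) n"
    unfolding diffs_def Cc_def by (simp add: pochhammer_rec algebra_simps)
qed

lemma strict_mono_double: "strict_mono (\<lambda>n::nat. 2 * n)"
  by (simp add: strict_mono_def)

lemma summable_bseq:
  assumes "summable a" shows "summable (bseq a)"
proof -
  have "summable (\<lambda>n. bseq a (2 * n)) \<longleftrightarrow> summable (bseq a)"
    by (rule summable_mono_reindex[OF strict_mono_double]) (auto simp: bseq_def elim!: evenE)
  moreover have "(\<lambda>n. bseq a (2 * n)) = a" by (simp add: bseq_def)
  ultimately show ?thesis using assms by simp
qed

lemma summable_b_pow:
  assumes sa: "summable a" and nn: "\<And>n. a n \<ge> 0" and x: "\<bar>x\<bar> < 1"
  shows "summable (\<lambda>n. bseq a n * x ^ n)"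
proof (rule summable_comparison_test[OF _ summable_bseq[OF sa]])
  have "norm (bseq a n * x ^ n) \<le> bseq a n" for n
  proof -
    have xn: "\<bar>x\<bar> ^ n \<le> 1" using x by (simp add: power_le_one)
    have b: "bseq a n \<ge> 0" by (rule bseq_nonneg[OF nn])
    have "norm (bseq a n * x ^ n) = bseq a n * \<bar>x\<bar> ^ n"
      using b by (simp add: abs_mult power_abs)
    also have "\<dots> \<le> bseq a n" using xn b by (simp add: mult_left_le)
    finally show ?thesis .
  qed
  then show "\<exists>N. \<forall>n\<ge>N. norm (bseq a n * x ^ n) \<le> bseq a n" by blast
qed

lemma summable_Cc:
  assumes sa: "summable a" and nn: "\<And>n. a n \<ge> 0"
  shows "\<bar>x\<bar> < 1 \<Longrightarrow> summable (\<lambda>n. Cc a k n * x ^ n)"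
proof (induction k arbitrary: x)
  case 0
  then show ?case using summable_b_pow[OF sa nn] by (simp add: Cc_def)
next
  case (Suc k)
  have "summable (\<lambda>n. diffs (Cc a k) n * x ^ n)"
    by (rule termdiff_converges[of x 1]) (use Suc in auto)
  then show ?case by (simp add: diffs_Cc)
qed

lemma deriv_Pk:
  assumes sa: "summable a" and nn: "\<And>n. a n \<ge> 0" and x: "\<bar>x\<bar> < 1"
  shows "(Pk a k has_field_derivative Pk a (Suc k) x) (at x)"
proof -
  have "((\<lambda>z. \<Sum>n. Cc a k n * z ^ n) has_field_derivative (\<Sum>n. diffs (Cc a k) n * x ^ n)) (at x)"
    by (rule termdiffs_strong'[of 1]) (use summable_Cc[OF sa nn] x in auto)
  then show ?thesis by (simp add: diffs_Cc Pk_def[abs_def])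
qed

lemma Pk0_sums:
  assumes sa: "summable a" and nn: "\<And>n. a n \<ge> 0" and x: "\<bar>x\<bar> < 1"
  shows "(\<lambda>n. a n * x ^ (2 * n)) sums Pk a 0 x"
proof -
  have "(\<lambda>n. bseq a (2 * n) * x ^ (2 * n)) sums Pk a 0 x \<longleftrightarrow> (\<lambda>n. bseq a n * x ^ n) sums Pk a 0 x"
    by (rule sums_mono_reindex[OF strict_mono_double, where f = "\<lambda>n. bseq a n * x ^ n"])
       (auto simp: bseq_def elim!: evenE)
  moreover have "(\<lambda>n. bseq a n * x ^ n) sums Pk a 0 x"
    using summable_sums[OF summable_Cc[OF sa nn, of x 0, OF x]] by (simp add: Pk_def Cc_def)
  ultimately show ?thesis by (simp add: bseq_def)
qed


lemma cmod_pow_sq: "(cmod (complex_of_real x ^ n))\<^sup>2 = (x::real) ^ (2 * n)"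
proof -
  have "(cmod (complex_of_real x ^ n))\<^sup>2 = (\<bar>x\<bar> ^ n)\<^sup>2" by (simp add: norm_power)
  also have "\<dots> = \<bar>x\<bar> ^ (2 * n)" by (simp add: power_mult mult.commute[of 2 n])
  also have "\<dots> = x ^ (2 * n)" by (simp add: power_even_abs)
  finally show ?thesis .
qed

lemma energy_eq:
  fixes \<nu> :: "'u measure" and mon :: "nat \<Rightarrow> 'u \<Rightarrow> complex"
  assumes mono_meas: "\<forall>n. mon n \<in> borel_measurable \<nu>"
    and mono_L2: "\<forall>n. integrable \<nu> (\<lambda>u. (cmod (mon n u))\<^sup>2)"
    and mono_orth: "\<forall>n k. n \<noteq> k \<longrightarrow> (LINT u|\<nu>. mon n u * cnj (mon k u)) = 0"
    and A_def: "A = (\<lambda>n. LINT u|\<nu>. (cmod (mon n u))\<^sup>2)"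
    and sa: "summable A" and nn: "\<And>n. A n \<ge> 0" and x: "\<bar>x\<bar> < 1"
  shows "S_energy \<nu> mon x = Pk A 0 x"
proof -
  have eq: "(LINT u|\<nu>. (cmod (\<Sum>n<N. complex_of_real x ^ n * mon n u))\<^sup>2) = (\<Sum>n<N. A n * x ^ (2 * n))" for N
  proof -
    have "(LINT u|\<nu>. (cmod (\<Sum>n<N. complex_of_real x ^ n * mon n u))\<^sup>2)
        = (\<Sum>n<N. (cmod (complex_of_real x ^ n))\<^sup>2 * A n)"
      unfolding A_def by (rule L2_partial[OF mono_meas mono_L2 mono_orth])
    also have "\<dots> = (\<Sum>n<N. A n * x ^ (2 * n))"
      by (intro sum.cong refl) (simp add: cmod_pow_sq)
    finally show ?thesis .
  qed
  have "(\<lambda>N. \<Sum>n<N. A n * x ^ (2 * n)) \<longlonglongrightarrow> Pk A 0 x"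
    using Pk0_sums[OF sa nn x] by (simp add: sums_def)
  then show ?thesis unfolding S_energy_def eq by (rule limI)
qed

lemma iter_deriv:
  fixes \<nu> :: "'u measure" and mon :: "nat \<Rightarrow> 'u \<Rightarrow> complex"
  assumes mono_meas: "\<forall>n. mon n \<in> borel_measurable \<nu>"
    and mono_L2: "\<forall>n. integrable \<nu> (\<lambda>u. (cmod (mon n u))\<^sup>2)"
    and mono_orth: "\<forall>n k. n \<noteq> k \<longrightarrow> (LINT u|\<nu>. mon n u * cnj (mon k u)) = 0"
    and A_def: "A = (\<lambda>n. LINT u|\<nu>. (cmod (mon n u))\<^sup>2)"
    and sa: "summable A" and nn: "\<And>n. A n \<ge> 0"
  shows "\<bar>x\<bar> < 1 \<Longrightarrow> (deriv ^^ k) (S_energy \<nu> mon) x = Pk A k x"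
proof (induction k arbitrary: x)
  case 0
  then show ?case using energy_eq[OF assms] by simp
next
  case (Suc k)
  have "(Pk A k has_field_derivative Pk A (Suc k) x) (at x)"
    by (rule deriv_Pk[OF sa nn Suc.prems])
  then have "((deriv ^^ k) (S_energy \<nu> mon) has_field_derivative Pk A (Suc k) x) (at x)"
  proof (rule has_field_derivative_transform_within_open[where S = "{-1<..<1}"])
    show "open {-1<..<(1::real)}" by simp
    show "x \<in> {-1<..<1}" using Suc.prems by auto
    show "Pk A k y = (deriv ^^ k) (S_energy \<nu> mon) y" if "y \<in> {-1<..<1}" for y
      using Suc.IH[of y] that by auto
  qed
  then show ?case by (simp add: DERIV_imp_deriv)
qed


lemma bdd_iff_summable:
  assumes sa: "summable a" and nn: "\<And>n. a n \<ge> 0"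
  shows "bdd_above (Pk a m ` {0<..<1}) \<longleftrightarrow> summable (Cc a m)"
proof
  assume "bdd_above (Pk a m ` {0<..<1})"
  then have "\<exists>M. \<forall>y\<in>Pk a m ` {0<..<1}. y \<le> M" by (simp only: bdd_above_def)
  then obtain B where B0: "\<forall>y\<in>Pk a m ` {0<..<1}. y \<le> B" by (elim exE)
  have B: "Pk a m x \<le> B" if x: "x \<in> {0<..<1}" for x
    by (rule bspec[OF B0 imageI[OF x]])
  show "summable (Cc a m)"
  proof (rule bounded_imp_summable[where B = B])
    show "0 \<le> Cc a m n" for n by (rule Cc_nonneg[OF nn])
    show "(\<Sum>k\<le>n. Cc a m k) \<le> B" for n
    proof -
      have lim: "((\<lambda>x. \<Sum>k\<le>n. Cc a m k * x ^ k) \<longlongrightarrow> (\<Sum>k\<le>n. Cc a m k * 1 ^ k)) (at_left 1)"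
        by (intro tendsto_intros)
      have ev: "eventually (\<lambda>x. (\<Sum>k\<le>n. Cc a m k * x ^ k) \<le> B) (at_left (1::real))"
      proof (rule eventually_mono[OF eventually_at_left_real[OF zero_less_one]])
        fix x :: real assume x: "x \<in> {0<..<1}"
        have "(\<Sum>k\<le>n. Cc a m k * x ^ k) \<le> (\<Sum>k. Cc a m k * x ^ k)"
          by (rule sum_le_suminf[OF summable_Cc[OF sa nn]])
             (use x Cc_nonneg[OF nn] in auto)
        also have "\<dots> = Pk a m x" by (simp add: Pk_def)
        also have "\<dots> \<le> B" using B x .
        finally show "(\<Sum>k\<le>n. Cc a m k * x ^ k) \<le> B" .
      qed
      have "(\<Sum>k\<le>n. Cc a m k * 1 ^ k) \<le> B"
        by (rule tendsto_le[OF trivial_limit_at_left_real tendsto_const lim ev])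
      then show ?thesis by simp
    qed
  qed
next
  assume sC: "summable (Cc a m)"
  show "bdd_above (Pk a m ` {0<..<1})"
  proof (rule bdd_aboveI2)
    fix x :: real assume x: "x \<in> {0<..<1}"
    have "Pk a m x = (\<Sum>k. Cc a m k * x ^ k)" by (simp add: Pk_def)
    also have "\<dots> \<le> (\<Sum>k. Cc a m k)"
    proof (rule suminf_le[OF _ summable_Cc[OF sa nn] sC])
      show "\<bar>x\<bar> < 1" using x by auto
      fix k
      have "x ^ k \<le> 1" using x by (simp add: power_le_one)
      then show "Cc a m k * x ^ k \<le> Cc a m k"
        using Cc_nonneg[OF nn] by (simp add: mult_left_le)
    qed
    finally show "Pk a m x \<le> (\<Sum>k. Cc a m k)" .
  qed
qed

lemma poch_upper: "pochhammer (real n + 1) m \<le> (real n + real m) ^ m"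
proof -
  have "pochhammer (real n + 1) m = (\<Prod>i\<in>{0..<m}. real n + 1 + real i)"
    by (simp add: pochhammer_prod)
  also have "\<dots> \<le> (\<Prod>i\<in>{0..<m}. real n + real m)"
    by (rule prod_mono) auto
  also have "\<dots> = (real n + real m) ^ m" by simp
  finally show ?thesis .
qed

lemma poch_lower: "(real n + 1) ^ m \<le> pochhammer (real n + 1) m"
proof -
  have "(real n + 1) ^ m = (\<Prod>i\<in>{0..<m}. real n + 1)" by simp
  also have "\<dots> \<le> (\<Prod>i\<in>{0..<m}. real n + 1 + real i)"
    by (rule prod_mono) auto
  also have "\<dots> = pochhammer (real n + 1) m"
    by (simp add: pochhammer_prod)
  finally show ?thesis .
qed

lemma pow_le_poch: "(real n + real m) ^ m \<le> real m ^ m * pochhammer (real n + 1) m"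
proof (cases "m = 0")
  case True then show ?thesis by simp
next
  case False
  have "real n + real m \<le> real m * (real n + 1)"
  proof -
    have m1: "1 \<le> real m" using False by simp
    have "1 * real n \<le> real m * real n" by (rule mult_right_mono[OF m1]) simp
    then show ?thesis by (simp add: distrib_left)
  qed
  then have "(real n + real m) ^ m \<le> (real m * (real n + 1)) ^ m"
    by (intro power_mono) auto
  also have "\<dots> = real m ^ m * (real n + 1) ^ m" by (simp add: power_mult_distrib)
  also have "\<dots> \<le> real m ^ m * pochhammer (real n + 1) m"
    by (intro mult_left_mono poch_lower) auto
  finally show ?thesis .
qed

lemma summable_Cc_iff:
  assumes nn: "\<And>n. a n \<ge> 0"
  shows "summable (Cc a m) \<longleftrightarrow> summable (\<lambda>n. real n ^ m * a n)"
proof -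
  define D where "D k = real k ^ m * bseq a k" for k
  have Dnn: "D k \<ge> 0" for k unfolding D_def using bseq_nonneg[OF nn] by simp
  have "summable (Cc a m) \<longleftrightarrow> summable (\<lambda>n. D (n + m))"
  proof
    assume sC: "summable (Cc a m)"
    show "summable (\<lambda>n. D (n + m))"
    proof (rule summable_comparison_test[OF _ summable_mult[OF sC, of "real m ^ m"]])
      have "norm (D (n + m)) \<le> real m ^ m * Cc a m n" for n
      proof -
        have "norm (D (n + m)) = (real n + real m) ^ m * bseq a (n + m)"
          using Dnn[of "n+m"] by (simp add: D_def)
        also have "\<dots> \<le> (real m ^ m * pochhammer (real n + 1) m) * bseq a (n + m)"
          by (intro mult_right_mono pow_le_poch bseq_nonneg nn)
        also have "\<dots> = real m ^ m * Cc a m n" by (simp add: Cc_def)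
        finally show "norm (D (n + m)) \<le> real m ^ m * Cc a m n" .
      qed
      then show "\<exists>N. \<forall>n\<ge>N. norm (D (n + m)) \<le> real m ^ m * Cc a m n" by blast
    qed
  next
    assume sD: "summable (\<lambda>n. D (n + m))"
    show "summable (Cc a m)"
    proof (rule summable_comparison_test[OF _ sD])
      have "norm (Cc a m n) \<le> D (n + m)" for n
      proof -
        have "norm (Cc a m n) = pochhammer (real n + 1) m * bseq a (n + m)"
          using Cc_nonneg[OF nn] by (simp add: Cc_def)
        also have "\<dots> \<le> (real n + real m) ^ m * bseq a (n + m)"
          by (intro mult_right_mono poch_upper bseq_nonneg nn)
        also have "\<dots> = D (n + m)" by (simp add: D_def)
        finally show "norm (Cc a m n) \<le> D (n + m)" .
      qed
      then show "\<exists>N. \<forall>n\<ge>N. norm (Cc a m n) \<le> D (n + m)" by blast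
    qed
  qed
  also have "\<dots> \<longleftrightarrow> summable D" by (rule summable_iff_shift)
  also have "\<dots> \<longleftrightarrow> summable (\<lambda>n. D (2 * n))"
    by (rule summable_mono_reindex[OF strict_mono_double, symmetric])
       (auto simp: D_def bseq_def elim!: evenE)
  also have "(\<lambda>n. D (2 * n)) = (\<lambda>n. 2 ^ m * (real n ^ m * a n))"
    by (simp add: D_def bseq_def power_mult_distrib mult.assoc)
  also have "summable \<dots> \<longleftrightarrow> summable (\<lambda>n. real n ^ m * a n)"
    by simp
  finally show ?thesis .
qed

lemma in_D_iff:
  assumes kernels: "\<forall>n. sq_int_sym_kernel n (Fk n)"
    and sa: "summable (\<lambda>n. fact n * kernel_norm_sq n (Fk n))"
  shows "in_D (real m) Fk \<longleftrightarrow> summable (\<lambda>n. real n ^ m * (fact n * kernel_norm_sq n (Fk n)))"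
proof -
  let ?a = "\<lambda>n. fact n * kernel_norm_sq n (Fk n)"
  have "in_D (real m) Fk \<longleftrightarrow> summable (\<lambda>n. (1 + real n powr real m) * ?a n)"
    using kernels by (simp add: in_D_def mult.assoc)
  also have "\<dots> \<longleftrightarrow> summable (\<lambda>n. ?a n + real n ^ m * ?a n)"
  proof (rule summable_cong)
    show "eventually (\<lambda>n. (1 + real n powr real m) * ?a n = ?a n + real n ^ m * ?a n) sequentially"
      using eventually_gt_at_top[of "0::nat"]
      by (rule eventually_mono) (simp add: powr_realpow algebra_simps)
  qed
  also have "\<dots> \<longleftrightarrow> summable (\<lambda>n. real n ^ m * ?a n)"
  proof
    assume "summable (\<lambda>n. ?a n + real n ^ m * ?a n)"
    from summable_diff[OF this sa] show "summable (\<lambda>n. real n ^ m * ?a n)" by simp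
  next
    assume "summable (\<lambda>n. real n ^ m * ?a n)"
    from summable_add[OF sa this] show "summable (\<lambda>n. ?a n + real n ^ m * ?a n)" .
  qed
  finally show ?thesis .
qed

theorem theorem2p8:
  fixes Fk :: "nat \<Rightarrow> (nat \<Rightarrow> real) \<Rightarrow> complex"
    and \<nu> :: "'u measure"
    and mon :: "nat \<Rightarrow> 'u \<Rightarrow> complex"
    and m :: nat
  assumes kernels: "\<forall>n. sq_int_sym_kernel n (Fk n)"
    and F_L2: "summable (\<lambda>n. fact n * kernel_norm_sq n (Fk n))"
    and nu_prob: "prob_space \<nu>"
    and mono_meas: "\<forall>n. mon n \<in> borel_measurable \<nu>"
    and mono_L2: "\<forall>n. integrable \<nu> (\<lambda>u. (cmod (mon n u))\<^sup>2)"
    and mono_orth: "\<forall>n k. n \<noteq> k \<longrightarrow> (LINT u|\<nu>. mon n u * cnj (mon k u)) = 0"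
    and mono_norm: "\<forall>n. (LINT u|\<nu>. (cmod (mon n u))\<^sup>2) = fact n * kernel_norm_sq n (Fk n)"
  shows "in_D (real m) Fk \<longleftrightarrow>
           bdd_above ((\<lambda>lam. (deriv ^^ m) (S_energy \<nu> mon) lam) ` {0<..<1})"
proof -
  define A where "A = (\<lambda>n. LINT u|\<nu>. (cmod (mon n u))\<^sup>2)"
  have A_eq: "A = (\<lambda>n. fact n * kernel_norm_sq n (Fk n))"
    using mono_norm by (simp add: A_def)
  have sa: "summable A" using F_L2 A_eq by simp
  have nn: "A n \<ge> 0" for n unfolding A_def by (rule integral_nonneg_AE) simp
  have img: "(\<lambda>lam. (deriv ^^ m) (S_energy \<nu> mon) lam) ` {0<..<1} = Pk A m ` {0<..<1}"
    by (rule image_cong[OF refl], rule iter_deriv[OF mono_meas mono_L2 mono_orth A_def sa nn]) auto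
  have "in_D (real m) Fk \<longleftrightarrow> summable (\<lambda>n. real n ^ m * A n)"
    using in_D_iff[OF kernels F_L2] A_eq by simp
  also have "\<dots> \<longleftrightarrow> summable (Cc A m)" using summable_Cc_iff[OF nn] by simp
  also have "\<dots> \<longleftrightarrow> bdd_above (Pk A m ` {0<..<1})" using bdd_iff_summable[OF sa nn] by simp
  finally show ?thesis using img by simp
qed

end
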